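(* Let $N,k$ be positive integers, $p_1,\dots,p_N$ primes with all $p_i>3$, and $s_1,\dots,s_N$ positive integers. Then the group $\mathbb{Z}_{p_1^{s_1}\cdots p_N^{s_N}}\mathbin{\mathrm{wr}}\mathbb{Z}^k$ admits an automorphism with finite Reidemeister number.
   Context: $\mathbb{Z}_q\mathbin{\mathrm{wr}}\mathbb{Z}^k=\bigoplus_{x\in\mathbb{Z}^k}(\mathbb{Z}_q)_x\rtimes\mathbb{Z}^k$ is the restricted wreath product with $\mathbb{Z}^k$ acting by shifting indices. The Reidemeister number $R(\varphi)$ of an automorphism $\varphi$ of a group $G$ is the number of equivalence classes of the relation $g_1\sim hg_2\varphi(h^{-1})$, $h\in G$. *)

theory Defs
  imports "HOL-Algebra.Algebra" "HOL-Computational_Algebra.Primes"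
begin

text \<open>The lattice Z^k, realised as integer vectors indexed by nat, vanishing at indices >= k.\<close>
definition zk :: "nat \<Rightarrow> (nat \<Rightarrow> int) set" where
  "zk k = {v. \<forall>i\<ge>k. v i = 0}"

text \<open>Base group: finitely supported functions Z^k -> Z_q (residues represented in {0..<q}).\<close>
definition lamps :: "nat \<Rightarrow> nat \<Rightarrow> ((nat \<Rightarrow> int) \<Rightarrow> int) set" where
  "lamps q k = {f. (\<forall>x. f x \<in> {0..<int q}) \<and> (\<forall>x. x \<notin> zk k \<longrightarrow> f x = 0)
                    \<and> finite {x. f x \<noteq> 0}}"

text \<open>Restricted wreath product Z_q wr Z^k = (direct sum of copies of Z_q) semidirect Z^k,
  Z^k acting by shifting indices: (f,a)(g,b) = (f + a.g, a+b), with (a.g)(x) = g(x-a).\<close>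
definition wreath :: "nat \<Rightarrow> nat \<Rightarrow> (((nat \<Rightarrow> int) \<Rightarrow> int) \<times> (nat \<Rightarrow> int)) monoid" where
  "wreath q k = \<lparr> carrier = lamps q k \<times> zk k,
     monoid.mult = (\<lambda>(f, a) (g, b). (\<lambda>x. (f x + g (\<lambda>i. x i - a i)) mod int q, \<lambda>i. a i + b i)),
     monoid.one = (\<lambda>_. 0, \<lambda>_. 0) \<rparr>"

definition reidemeister_rel :: "('a, 'b) monoid_scheme \<Rightarrow> ('a \<Rightarrow> 'a) \<Rightarrow> ('a \<times> 'a) set" where
  "reidemeister_rel G phi = {(x, y). x \<in> carrier G \<and> y \<in> carrier G \<and>
      (\<exists>h\<in>carrier G. x = h \<otimes>\<^bsub>G\<^esub> y \<otimes>\<^bsub>G\<^esub> phi (inv\<^bsub>G\<^esub> h))}"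

definition reidemeister_classes :: "('a, 'b) monoid_scheme \<Rightarrow> ('a \<Rightarrow> 'a) \<Rightarrow> 'a set set" where
  "reidemeister_classes G phi = carrier G // reidemeister_rel G phi"

end

theory Submission
  imports Defs
begin

lemma wr_carrier: "carrier (wreath q k) = lamps q k \<times> zk k" by (simp add: wreath_def)
lemma wr_mult: "(f,a) \<otimes>\<^bsub>wreath q k\<^esub> (g,b) = (\<lambda>x. (f x + g (\<lambda>i. x i - a i)) mod int q, \<lambda>i. a i + b i)"
  by (simp add: wreath_def)
lemma wr_one: "\<one>\<^bsub>wreath q k\<^esub> = (\<lambda>_. 0, \<lambda>_. 0)" by (simp add: wreath_def)

lemma zk_notin: assumes "a \<in> zk k" "x \<notin> zk k"
  shows "(\<lambda>i. x i - a i) \<notin> zk k" "(\<lambda>i. a i - x i) \<notin> zk k" "(\<lambda>i. x i + a i) \<notin> zk k" "(\<lambda>i. - x i) \<notin> zk k"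
  using assms by (auto simp: zk_def)

lemma zk_closed: assumes "a \<in> zk k" "b \<in> zk k"
  shows "(\<lambda>i. a i + b i) \<in> zk k" "(\<lambda>i. - a i) \<in> zk k" "(\<lambda>i. a i - b i) \<in> zk k"
  using assms by (auto simp: zk_def)

lemma fin_vim: assumes "finite {x. g x \<noteq> (0::int)}" "inj t" shows "finite {x. g (t x) \<noteq> 0}"
proof -
  have "{x. g (t x) \<noteq> 0} = t -` {x. g x \<noteq> 0}" by auto
  thus ?thesis using finite_vimageI[OF assms] by simp
qed

lemma inj_shift1: "inj (\<lambda>x::nat\<Rightarrow>int. (\<lambda>i. x i - a i))"
  by (auto intro!: injI simp: fun_eq_iff)
lemma inj_shift2: "inj (\<lambda>x::nat\<Rightarrow>int. (\<lambda>i. a i - x i))"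
  by (auto intro!: injI simp: fun_eq_iff)
lemma inj_shift3: "inj (\<lambda>x::nat\<Rightarrow>int. (\<lambda>i. x i + a i))"
  by (auto intro!: injI simp: fun_eq_iff)
lemma inj_neg: "inj (\<lambda>x::nat\<Rightarrow>int. (\<lambda>i. - x i))"
  by (auto intro!: injI simp: fun_eq_iff)

lemma lampsI:
  assumes "q > 0" "\<And>x. x \<notin> zk k \<Longrightarrow> F x mod int q = 0"
    "finite {x. F x \<noteq> 0}"
  shows "(\<lambda>x. F x mod int q) \<in> lamps q k"
proof -
  have "{x. F x mod int q \<noteq> 0} \<subseteq> {x. F x \<noteq> 0}" by auto
  then show ?thesis using assms finite_subset by (auto simp: lamps_def)
qed

lemma lamps_mod: "f \<in> lamps q k \<Longrightarrow> f x mod int q = f x"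
  by (auto simp: lamps_def intro!: mod_pos_pos_trivial)

lemma wr_group: assumes "q > 0" shows "group (wreath q k)"
proof (rule groupI)
  fix x y assume "x \<in> carrier (wreath q k)" "y \<in> carrier (wreath q k)"
  then obtain f a g b where x: "x = (f,a)" "f \<in> lamps q k" "a \<in> zk k" and y: "y = (g,b)" "g \<in> lamps q k" "b \<in> zk k"
    by (auto simp: wr_carrier)
  have "(\<lambda>x. (f x + g (\<lambda>i. x i - a i)) mod int q) \<in> lamps q k"
  proof (rule lampsI[OF assms])
    show "x \<notin> zk k \<Longrightarrow> (f x + g (\<lambda>i. x i - a i)) mod int q = 0" for x
      using x y zk_notin[of a k x] by (auto simp: lamps_def)
    have "finite ({x. f x \<noteq> 0} \<union> {x. g (\<lambda>i. x i - a i) \<noteq> 0})"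
      using x y fin_vim[OF _ inj_shift1, of g a] by (auto simp: lamps_def)
    then show "finite {x. f x + g (\<lambda>i. x i - a i) \<noteq> 0}"
      by (rule finite_subset[rotated]) auto
  qed
  then show "x \<otimes>\<^bsub>wreath q k\<^esub> y \<in> carrier (wreath q k)"
    using x y by (simp add: wr_mult wr_carrier zk_closed)
next
  show "\<one>\<^bsub>wreath q k\<^esub> \<in> carrier (wreath q k)"
    using assms by (simp add: wr_one wr_carrier lamps_def zk_def)
next
  fix x y z assume "x \<in> carrier (wreath q k)" "y \<in> carrier (wreath q k)" "z \<in> carrier (wreath q k)"
  then obtain f a g b h c where "x = (f,a)" "y = (g,b)" "z = (h,c)" by (auto simp: wr_carrier)
  then show "x \<otimes>\<^bsub>wreath q k\<^esub> y \<otimes>\<^bsub>wreath q k\<^esub> z = x \<otimes>\<^bsub>wreath q k\<^esub> (y \<otimes>\<^bsub>wreath q k\<^esub> z)"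
  proof -
    have e: "(\<lambda>i. x i - (a i + b i)) = (\<lambda>i. x i - a i - b i)" for x :: "nat \<Rightarrow> int"
      by (simp add: algebra_simps)
    show ?thesis using \<open>x = (f,a)\<close> \<open>y = (g,b)\<close> \<open>z = (h,c)\<close>
      by (simp add: wr_mult e add.assoc mod_add_left_eq mod_add_right_eq)
  qed
next
  fix x assume "x \<in> carrier (wreath q k)"
  then obtain f a where x: "x = (f,a)" "f \<in> lamps q k" "a \<in> zk k" by (auto simp: wr_carrier)
  then show "\<one>\<^bsub>wreath q k\<^esub> \<otimes>\<^bsub>wreath q k\<^esub> x = x"
    by (simp add: wr_one wr_mult lamps_mod)
next
  fix x assume "x \<in> carrier (wreath q k)"
  then obtain f a where x: "x = (f,a)" "f \<in> lamps q k" "a \<in> zk k" by (auto simp: wr_carrier)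
  let ?g = "\<lambda>x. (- f (\<lambda>i. x i + a i)) mod int q"
  have "?g \<in> lamps q k"
  proof (rule lampsI[OF assms])
    show "x \<notin> zk k \<Longrightarrow> (- f (\<lambda>i. x i + a i)) mod int q = 0" for x
      using x zk_notin[of a k x] by (auto simp: lamps_def)
    show "finite {x. - f (\<lambda>i. x i + a i) \<noteq> 0}"
      using x fin_vim[OF _ inj_shift3, of f a] by (auto simp: lamps_def)
  qed
  moreover have "(?g, \<lambda>i. - a i) \<otimes>\<^bsub>wreath q k\<^esub> x = \<one>\<^bsub>wreath q k\<^esub>"
  proof -
    have e: "(\<lambda>i. x i - - a i) = (\<lambda>i. x i + a i)" for x :: "nat \<Rightarrow> int" by simp
    show ?thesis using x by (simp add: wr_mult wr_one e mod_add_left_eq)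
  qed
  ultimately show "\<exists>y\<in>carrier (wreath q k). y \<otimes>\<^bsub>wreath q k\<^esub> x = \<one>\<^bsub>wreath q k\<^esub>"
    using x zk_closed(2)[OF x(3) x(3)] unfolding wr_carrier by blast
qed

lemma rr_equiv: assumes G: "group G" and ph: "phi \<in> hom G G"
  shows "equiv (carrier G) (reidemeister_rel G phi)"
proof -
  interpret group_hom G G phi using G ph by (simp add: group_hom_def group_hom_axioms_def)
  show ?thesis
  proof (rule equivI)
    show "reidemeister_rel G phi \<subseteq> carrier G \<times> carrier G"
      by (auto simp: reidemeister_rel_def)
  next
    show "refl_on (carrier G) (reidemeister_rel G phi)"
    proof (rule refl_onI)
      fix x assume x: "x \<in> carrier G"
      have "x = \<one>\<^bsub>G\<^esub> \<otimes>\<^bsub>G\<^esub> x \<otimes>\<^bsub>G\<^esub> phi (inv\<^bsub>G\<^esub> \<one>\<^bsub>G\<^esub>)" using x by simp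
      then show "(x, x) \<in> reidemeister_rel G phi" using x
        unfolding reidemeister_rel_def by blast
    qed
  next
    show "sym (reidemeister_rel G phi)"
    proof (rule symI)
      fix x y assume "(x, y) \<in> reidemeister_rel G phi"
      then obtain h where x: "x \<in> carrier G" and y: "y \<in> carrier G" and h: "h \<in> carrier G"
        and e: "x = h \<otimes>\<^bsub>G\<^esub> y \<otimes>\<^bsub>G\<^esub> phi (inv\<^bsub>G\<^esub> h)"
        unfolding reidemeister_rel_def by blast
      have "y = inv\<^bsub>G\<^esub> h \<otimes>\<^bsub>G\<^esub> x \<otimes>\<^bsub>G\<^esub> phi (inv\<^bsub>G\<^esub> (inv\<^bsub>G\<^esub> h))"
        using e x y h apply (simp add: m_assoc hom_inv) by (simp add: m_assoc[symmetric])
      then show "(y, x) \<in> reidemeister_rel G phi" using x y h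
        unfolding reidemeister_rel_def by blast
    qed
  next
    show "trans (reidemeister_rel G phi)"
    proof (rule transI)
      fix x y z assume "(x, y) \<in> reidemeister_rel G phi" "(y, z) \<in> reidemeister_rel G phi"
      then obtain h h' where x: "x \<in> carrier G" and y: "y \<in> carrier G" and h: "h \<in> carrier G"
        and e: "x = h \<otimes>\<^bsub>G\<^esub> y \<otimes>\<^bsub>G\<^esub> phi (inv\<^bsub>G\<^esub> h)"
        and z: "z \<in> carrier G" and h': "h' \<in> carrier G"
        and e': "y = h' \<otimes>\<^bsub>G\<^esub> z \<otimes>\<^bsub>G\<^esub> phi (inv\<^bsub>G\<^esub> h')"
        unfolding reidemeister_rel_def by blast
      have "x = (h \<otimes>\<^bsub>G\<^esub> h') \<otimes>\<^bsub>G\<^esub> z \<otimes>\<^bsub>G\<^esub> phi (inv\<^bsub>G\<^esub> (h \<otimes>\<^bsub>G\<^esub> h'))"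
        using e e' z h h' by (simp add: m_assoc hom_inv inv_mult_group)
      then show "(x, z) \<in> reidemeister_rel G phi" using x z h h'
        unfolding reidemeister_rel_def by blast
    qed
  qed
qed

definition phi2 :: "nat \<Rightarrow> ((nat \<Rightarrow> int) \<Rightarrow> int) \<times> (nat \<Rightarrow> int) \<Rightarrow> ((nat \<Rightarrow> int) \<Rightarrow> int) \<times> (nat \<Rightarrow> int)" where
  "phi2 q = (\<lambda>(f,a). (\<lambda>x. (2 * f (\<lambda>i. - x i)) mod int q, \<lambda>i. - a i))"
definition psiv :: "nat \<Rightarrow> ((nat \<Rightarrow> int) \<Rightarrow> int) \<times> (nat \<Rightarrow> int) \<Rightarrow> ((nat \<Rightarrow> int) \<Rightarrow> int) \<times> (nat \<Rightarrow> int)" where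
  "psiv q = (\<lambda>(f,a). (\<lambda>x. (int ((q+1) div 2) * f (\<lambda>i. - x i)) mod int q, \<lambda>i. - a i))"

lemma scal_lamps: assumes "q > 0" "f \<in> lamps q k"
  shows "(\<lambda>x. (c * f (\<lambda>i. - x i)) mod int q) \<in> lamps q k"
proof (rule lampsI[OF assms(1)])
  show "x \<notin> zk k \<Longrightarrow> (c * f (\<lambda>i. - x i)) mod int q = 0" for x
    using assms zk_notin(4)[of "\<lambda>_. 0" k x] by (auto simp: lamps_def zk_def)
  have "finite {x. f (\<lambda>i. - x i) \<noteq> 0}"
    using assms fin_vim[OF _ inj_neg, of f] by (auto simp: lamps_def)
  then show "finite {x. c * f (\<lambda>i. - x i) \<noteq> 0}"
    by (rule finite_subset[rotated]) auto
qed

lemma phi2_carrier: assumes "q > 0" "x \<in> carrier (wreath q k)" shows "phi2 q x \<in> carrier (wreath q k)"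
  using assms scal_lamps[OF assms(1)] zk_closed(2) by (auto simp: wr_carrier phi2_def)

lemma psiv_carrier: assumes "q > 0" "x \<in> carrier (wreath q k)" shows "psiv q x \<in> carrier (wreath q k)"
  using assms scal_lamps[OF assms(1)] zk_closed(2) by (auto simp: wr_carrier psiv_def)

lemma phi2_hom: assumes "q > 0" shows "phi2 q \<in> hom (wreath q k) (wreath q k)"
  unfolding hom_def
proof (intro CollectI conjI ballI)
  show "phi2 q \<in> carrier (wreath q k) \<rightarrow> carrier (wreath q k)" using phi2_carrier[OF assms] by blast
  fix x y assume "x \<in> carrier (wreath q k)" "y \<in> carrier (wreath q k)"
  then obtain f a g b where x: "x = (f,a)" and y: "y = (g,b)" by (auto simp: wr_carrier)
  have e: "(\<lambda>i. - (x i - - a i)) = (\<lambda>i. - x i - a i)" for x :: "nat \<Rightarrow> int" by (simp add: fun_eq_iff)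
  show "phi2 q (x \<otimes>\<^bsub>wreath q k\<^esub> y) = phi2 q x \<otimes>\<^bsub>wreath q k\<^esub> phi2 q y"
    using x y by (simp add: phi2_def wr_mult e mod_add_eq mod_mult_right_eq distrib_left)
qed

lemma psi_phi: assumes "odd q" "x \<in> carrier (wreath q k)" shows "psiv q (phi2 q x) = x"
proof -
  obtain f a where x: "x = (f,a)" "f \<in> lamps q k" using assms(2) by (auto simp: wr_carrier)
  have v: "int ((q+1) div 2) * 2 = int q + 1" using assms(1) by (auto elim!: oddE)
  have "(int ((q+1) div 2) * (2 * f y)) mod int q = f y" for y
  proof -
    have "int ((q+1) div 2) * (2 * f y) = f y + int q * f y" using v by (simp add: algebra_simps)
    then show ?thesis using lamps_mod[OF x(2)] by simp
  qed
  then show ?thesis using x by (simp add: phi2_def psiv_def mod_mult_right_eq)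
qed

lemma phi_psi: assumes "odd q" "x \<in> carrier (wreath q k)" shows "phi2 q (psiv q x) = x"
proof -
  obtain f a where x: "x = (f,a)" "f \<in> lamps q k" using assms(2) by (auto simp: wr_carrier)
  have v: "int ((q+1) div 2) * 2 = int q + 1" using assms(1) by (auto elim!: oddE)
  have "(2 * (int ((q+1) div 2) * f y)) mod int q = f y" for y
  proof -
    have "2 * (int ((q+1) div 2) * f y) = f y + int q * f y" using v by (simp add: algebra_simps)
    then show ?thesis using lamps_mod[OF x(2)] by simp
  qed
  then show ?thesis using x by (simp add: phi2_def psiv_def mod_mult_right_eq)
qed

lemma phi2_iso: assumes "odd q" shows "phi2 q \<in> iso (wreath q k) (wreath q k)"
proof -
  have q: "q > 0" using assms by (auto elim!: oddE)
  have "bij_betw (phi2 q) (carrier (wreath q k)) (carrier (wreath q k))"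
    by (rule bij_betw_byWitness[where f'="psiv q"])
      (use psi_phi[OF assms] phi_psi[OF assms] phi2_carrier[OF q] psiv_carrier[OF q] in auto)
  then show ?thesis using phi2_hom[OF q] by (simp add: iso_def)
qed

lemma stepA: assumes "odd q" and w: "int q dvd 3*w + 1" and fa: "(f,a) \<in> carrier (wreath q k)"
  shows "((f,a),(\<lambda>_. 0,a)) \<in> reidemeister_rel (wreath q k) (phi2 q)"
proof -
  have q: "q > 0" using assms by (auto elim!: oddE)
  interpret group "wreath q k" using wr_group[OF q] .
  have f: "f \<in> lamps q k" and a: "a \<in> zk k" using fa by (auto simp: wr_carrier)
  define g where "g = (\<lambda>x. (w * (f x + 2 * f (\<lambda>i. a i - x i))) mod int q)"
  have g: "g \<in> lamps q k" unfolding g_def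
  proof (rule lampsI[OF q])
    show "x \<notin> zk k \<Longrightarrow> (w * (f x + 2 * f (\<lambda>i. a i - x i))) mod int q = 0" for x
      using f a zk_notin[of a k x] by (auto simp: lamps_def)
    have "finite ({x. f x \<noteq> 0} \<union> {x. f (\<lambda>i. a i - x i) \<noteq> 0})"
      using f fin_vim[OF _ inj_shift2, of f a] by (auto simp: lamps_def)
    then show "finite {x. w * (f x + 2 * f (\<lambda>i. a i - x i)) \<noteq> 0}"
      by (rule finite_subset[rotated]) auto
  qed
  define gi where "gi = (\<lambda>x. (- g x) mod int q)"
  have gi: "gi \<in> lamps q k" unfolding gi_def
  proof (rule lampsI[OF q])
    show "x \<notin> zk k \<Longrightarrow> (- g x) mod int q = 0" for x
      using g by (auto simp: lamps_def)
    show "finite {x. - g x \<noteq> 0}" using g by (auto simp: lamps_def)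
  qed
  have hc: "(g, \<lambda>_. 0) \<in> carrier (wreath q k)" using g by (simp add: wr_carrier zk_def)
  have hic: "(gi, \<lambda>_. 0) \<in> carrier (wreath q k)" using gi by (simp add: wr_carrier zk_def)
  have "(gi, \<lambda>_. 0) \<otimes>\<^bsub>wreath q k\<^esub> (g, \<lambda>_. 0) = \<one>\<^bsub>wreath q k\<^esub>"
    by (simp add: wr_mult wr_one gi_def mod_add_left_eq)
  then have inv: "inv\<^bsub>wreath q k\<^esub> (g, \<lambda>_. 0) = (gi, \<lambda>_. 0)"
    using inv_equality hc hic by blast
  obtain t where t: "3*w + 1 = int q * t" using w by blast
  have key: "(g x mod int q + 2 * (- g (\<lambda>i. a i - x i) mod int q) mod int q) mod int q = f x" for x
  proof -
    have e2: "(\<lambda>i. a i - (a i - x i)) = x" by (simp add: fun_eq_iff)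
    have "(g x mod int q + 2 * (- g (\<lambda>i. a i - x i) mod int q) mod int q) mod int q
       = (w * (f x + 2 * f (\<lambda>i. a i - x i)) + 2 * (- (w * (f (\<lambda>i. a i - x i) + 2 * f x)))) mod int q"
      unfolding g_def e2 by (simp add: mod_simps)
    also have "w * (f x + 2 * f (\<lambda>i. a i - x i)) + 2 * (- (w * (f (\<lambda>i. a i - x i) + 2 * f x)))
        = f x - (3 * w + 1) * f x" by (simp add: algebra_simps)
    also have "\<dots> = f x + int q * (- t * f x)" unfolding t by (simp add: algebra_simps)
    finally show ?thesis by (simp only: mod_mult_self2 lamps_mod[OF f])
  qed
  have "(f,a) = (g, \<lambda>_. 0) \<otimes>\<^bsub>wreath q k\<^esub> (\<lambda>_. 0, a) \<otimes>\<^bsub>wreath q k\<^esub> phi2 q (inv\<^bsub>wreath q k\<^esub> (g, \<lambda>_. 0))"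
    unfolding inv by (simp add: wr_mult phi2_def gi_def fun_eq_iff) (intro allI, simp only: key)
  moreover have "(\<lambda>_. 0, a) \<in> carrier (wreath q k)" using a q by (simp add: wr_carrier lamps_def)
  ultimately show ?thesis using fa hc unfolding reidemeister_rel_def by blast
qed

lemma stepB: assumes q: "q > 0" and a: "a \<in> zk k" and c: "c \<in> zk k"
  shows "((\<lambda>_. 0, \<lambda>i. a i + 2 * c i),(\<lambda>_. 0,a)) \<in> reidemeister_rel (wreath q k) (phi2 q)"
proof -
  interpret group "wreath q k" using wr_group[OF q] .
  have hc: "(\<lambda>_. 0, c) \<in> carrier (wreath q k)" using c q by (simp add: wr_carrier lamps_def)
  have hic: "(\<lambda>_. 0, \<lambda>i. - c i) \<in> carrier (wreath q k)" using c q zk_closed(2)[OF c c] by (simp add: wr_carrier lamps_def)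
  have "(\<lambda>_. 0, \<lambda>i. - c i) \<otimes>\<^bsub>wreath q k\<^esub> (\<lambda>_. 0, c) = \<one>\<^bsub>wreath q k\<^esub>"
    by (simp add: wr_mult wr_one)
  then have inv: "inv\<^bsub>wreath q k\<^esub> (\<lambda>_. 0, c) = (\<lambda>_. 0, \<lambda>i. - c i)"
    using inv_equality hc hic by blast
  have "(\<lambda>_. 0, \<lambda>i. a i + 2 * c i) = (\<lambda>_. 0, c) \<otimes>\<^bsub>wreath q k\<^esub> (\<lambda>_. 0, a) \<otimes>\<^bsub>wreath q k\<^esub> phi2 q (inv\<^bsub>wreath q k\<^esub> (\<lambda>_. 0, c))"
    unfolding inv by (simp add: wr_mult phi2_def fun_eq_iff)
  moreover have "(\<lambda>_. 0, a) \<in> carrier (wreath q k)" using a q by (simp add: wr_carrier lamps_def)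
  moreover have "(\<lambda>_. 0, \<lambda>i. a i + 2 * c i) \<in> carrier (wreath q k)"
    using a c q by (simp add: wr_carrier lamps_def zk_def)
  ultimately show ?thesis using hc unfolding reidemeister_rel_def by blast
qed

lemma bits_finite: "finite {b :: nat \<Rightarrow> int. b \<in> zk k \<and> (\<forall>i. b i \<in> {0,1})}"
proof -
  have "{b :: nat \<Rightarrow> int. b \<in> zk k \<and> (\<forall>i. b i \<in> {0,1})} \<subseteq> (\<lambda>S i. if i \<in> S then 1 else 0) ` Pow {..<k}"
  proof
    fix b :: "nat \<Rightarrow> int" assume b: "b \<in> {b. b \<in> zk k \<and> (\<forall>i. b i \<in> {0,1})}"
    have "b = (\<lambda>i. if i \<in> {i. i < k \<and> b i = 1} then 1 else 0)"
    proof
      fix i show "b i = (if i \<in> {i. i < k \<and> b i = 1} then 1 else 0)"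
        using b by (cases "i < k") (auto simp: zk_def)
    qed
    then show "b \<in> (\<lambda>S i. if i \<in> S then 1 else 0) ` Pow {..<k}" by blast
  qed
  then show ?thesis by (rule finite_subset) simp
qed

lemma main: fixes q k :: nat and w :: int assumes "odd q" and w: "int q dvd 3*w + 1"
  shows "\<exists>phi. phi \<in> iso (wreath q k) (wreath q k) \<and> finite (reidemeister_classes (wreath q k) phi)"
proof (intro exI conjI)
  have q: "q > 0" using assms by (auto elim!: oddE)
  show iso: "phi2 q \<in> iso (wreath q k) (wreath q k)" using phi2_iso[OF assms(1)] .
  let ?R = "reidemeister_rel (wreath q k) (phi2 q)"
  have eq: "equiv (carrier (wreath q k)) ?R"
    using rr_equiv[OF wr_group[OF q]] iso by (simp add: iso_def)
  have "reidemeister_classes (wreath q k) (phi2 q) \<subseteq>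
      (\<lambda>b. ?R `` {(\<lambda>_. 0, b)}) ` {b :: nat \<Rightarrow> int. b \<in> zk k \<and> (\<forall>i. b i \<in> {0,1})}"
  proof
    fix Cl assume "Cl \<in> reidemeister_classes (wreath q k) (phi2 q)"
    then obtain f a where fa: "(f,a) \<in> carrier (wreath q k)" and Cl: "Cl = ?R `` {(f,a)}"
      unfolding reidemeister_classes_def quotient_def by auto
    have a: "a \<in> zk k" using fa by (simp add: wr_carrier)
    define c where "c = (\<lambda>i. - (a i div 2))"
    have c: "c \<in> zk k" using a by (simp add: zk_def c_def)
    have r: "(\<lambda>i. a i + 2 * c i) = (\<lambda>i. a i mod 2)" proof
      fix i show "a i + 2 * c i = a i mod 2"
        using minus_mult_div_eq_mod[of "a i" 2] by (simp add: c_def)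
    qed
    have "Cl = ?R `` {(\<lambda>_. 0, a)}" using Cl equiv_class_eq[OF eq stepA[OF assms(1) w fa]] by simp
    also have "\<dots> = ?R `` {(\<lambda>_. 0, \<lambda>i. a i mod 2)}"
      using equiv_class_eq[OF eq stepB[OF q a c]] r by simp
    finally have "Cl = ?R `` {(\<lambda>_. 0, \<lambda>i. a i mod 2)}" .
    moreover have "(\<lambda>i. a i mod 2) \<in> {b :: nat \<Rightarrow> int. b \<in> zk k \<and> (\<forall>i. b i \<in> {0,1})}"
    proof -
      have "a i mod 2 \<in> {0,1}" for i
        using pos_mod_bound[of 2 "a i"] pos_mod_sign[of 2 "a i"] by auto
      then show ?thesis using a by (auto simp: zk_def)
    qed
    ultimately show "Cl \<in> (\<lambda>b. ?R `` {(\<lambda>_. 0, b)}) ` {b :: nat \<Rightarrow> int. b \<in> zk k \<and> (\<forall>i. b i \<in> {0,1})}"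
      by blast
  qed
  then show "finite (reidemeister_classes (wreath q k) (phi2 q))"
    using bits_finite finite_subset by blast
qed

lemma small_not_dvd:
  fixes N :: nat and p s :: "nat \<Rightarrow> nat"
  assumes "\<And>i. i < N \<Longrightarrow> Factorial_Ring.prime (p i)" "\<And>i. i < N \<Longrightarrow> p i > 3"
    and r: "Factorial_Ring.prime (r::nat)" "r \<le> 3"
  shows "\<not> r dvd (\<Prod>i<N. p i ^ s i)"
proof
  assume "r dvd (\<Prod>i<N. p i ^ s i)"
  moreover have "r dvd prod (\<lambda>i. p i ^ s i) {..<N} = (\<exists>i\<in>{..<N}. r dvd p i ^ s i)"
    by (rule prime_dvd_prod_iff[OF finite_lessThan r(1)])
  ultimately have "\<exists>i\<in>{..<N}. r dvd p i ^ s i" by simp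
  then obtain i where i: "i < N" "r dvd p i ^ s i" by auto
  then have "r dvd p i" using prime_dvd_power r(1) by blast
  then have "r = 1 \<or> r = p i" using assms(1)[OF i(1)] prime_nat_iff by blast
  then show False using r assms(2)[OF i(1)] by (auto simp: prime_nat_iff)
qed

theorem proposition4p5:
  fixes N k :: nat and p s :: "nat \<Rightarrow> nat"
  assumes "N \<ge> 1" and "k \<ge> 1"
    and "\<And>i. i < N \<Longrightarrow> Factorial_Ring.prime (p i)"
    and "\<And>i. i < N \<Longrightarrow> p i > 3"
    and "\<And>i. i < N \<Longrightarrow> s i \<ge> 1"
  shows "\<exists>phi. phi \<in> iso (wreath (\<Prod>i<N. p i ^ s i) k) (wreath (\<Prod>i<N. p i ^ s i) k)
           \<and> finite (reidemeister_classes (wreath (\<Prod>i<N. p i ^ s i) k) phi)"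
proof -
  let ?q = "\<Prod>i<N. p i ^ s i"
  have odd: "odd ?q" using small_not_dvd[where r=2 and N=N and p=p and s=s] assms(3,4) by auto
  have "\<not> 3 dvd ?q" using small_not_dvd[where r=3 and N=N and p=p and s=s] assms(3,4) by auto
  then obtain x y where xy: "?q * x = Suc (3 * y)" using bezout_prime[of 3 ?q] by auto
  have "int ?q dvd 3 * int y + 1"
  proof
    show "3 * int y + 1 = int ?q * int x" using arg_cong[OF xy, of int] by simp
  qed
  then show ?thesis using main[OF odd] by blast
qed

end
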